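(* Let $G$ be a compact abelian group with discrete dual group $\Gamma$, let $N \in \mathbb{N}$ and $E \subset \Gamma$. The following are equivalent: (1) $E$ is $N$-PR; (2) whenever $\gamma_1, \dots, \gamma_n \in E$ are distinct and $\prod_{i=1}^n \gamma_i^{m_i} = 1$ for some integers $m_1,\dots,m_n \in \mathbb{Z}$, then $N$ divides $m_i$ for all $i$.
   Context: Characters are written multiplicatively; $\mathbb{Z}_N$ is identified with the $N$-th roots of unity in the unit circle $\mathbb{T}$. A subset $E \subset \Gamma$ is $N$-PR if for every function $\varphi: E \to \mathbb{Z}_N$ there exists $x \in G$ with $\varphi(\gamma) = \gamma(x)$ for all $\gamma \in E$. *)

theory Defs
  imports "HOL-Analysis.Analysis"
begin

text \<open>The group G is a type of class topological_ab_group_add (written additively),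
  compact and Hausdorff.\<close>

definition character :: "('g::topological_ab_group_add \<Rightarrow> complex) \<Rightarrow> bool" where
  "character \<gamma> \<longleftrightarrow> continuous_on UNIV \<gamma> \<and> (\<forall>x. norm (\<gamma> x) = 1)
      \<and> (\<forall>x y. \<gamma> (x + y) = \<gamma> x * \<gamma> y)"

definition dual_group :: "('g::topological_ab_group_add \<Rightarrow> complex) set" where
  "dual_group = {\<gamma>. character \<gamma>}"

text \<open>Z_N identified with the N-th roots of unity.\<close>
definition roots_of_unity :: "nat \<Rightarrow> complex set" where
  "roots_of_unity N = {z. z ^ N = 1}"

definition N_PR :: "nat \<Rightarrow> ('g::topological_ab_group_add \<Rightarrow> complex) set \<Rightarrow> bool" where
  "N_PR N E \<longleftrightarrow> (\<forall>\<phi>. (\<forall>\<gamma>\<in>E. \<phi> \<gamma> \<in> roots_of_unity N) \<longrightarrow>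
      (\<exists>x. \<forall>\<gamma>\<in>E. \<phi> \<gamma> = \<gamma> x))"

end

theory Submission
  imports Defs
begin

definition ischr :: "('g::ab_group_add \<Rightarrow> complex) \<Rightarrow> bool" where
  "ischr \<kappa> \<longleftrightarrow> (\<forall>x. norm (\<kappa> x) = 1) \<and> (\<forall>x y. \<kappa> (x + y) = \<kappa> x * \<kappa> y)"

lemma ischr_zero: assumes "ischr \<kappa>" shows "\<kappa> 0 = 1"
proof -
  have "\<kappa> 0 = \<kappa> 0 * \<kappa> 0" using assms unfolding ischr_def by (metis add_0)
  moreover have "\<kappa> 0 \<noteq> 0" using assms unfolding ischr_def by (metis norm_zero zero_neq_one)
  ultimately show ?thesis by simp
qed

lemma ischr_sum: assumes "ischr \<kappa>" shows "\<kappa> (\<Sum>i\<in>I. f i) = (\<Prod>i\<in>I. \<kappa> (f i))"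
proof (induction I rule: infinite_finite_induct)
  case (infinite A) then show ?case using ischr_zero[OF assms] by simp
next
  case empty then show ?case using ischr_zero[OF assms] by simp
next
  case (insert a A) then show ?case using assms unfolding ischr_def by simp
qed

lemma sum_list_concat': "sum_list (concat xss) = sum_list (map sum_list xss)"
  by (induct xss) auto

lemma norm_sum_list_le': "norm (sum_list (map f ys)) \<le> sum_list (map (\<lambda>y. norm (f y :: 'a::real_normed_vector)) ys)"
proof (induct ys)
  case (Cons a ys) then show ?case by simp (metis add_left_mono norm_triangle_ineq order_trans)
qed simp

lemma geom_bound:
  fixes \<zeta> :: complex assumes "norm \<zeta> = 1" "\<zeta> \<noteq> 1"
  shows "norm (\<Sum>k<K. \<zeta>^k) \<le> 2 / norm (1 - \<zeta>)"
proof -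
  have "norm (\<Sum>k<K. \<zeta>^k) = norm (1 - \<zeta>^K) / norm (1 - \<zeta>)"
    using assms by (simp add: sum_gp_strict norm_divide)
  also have "norm (1 - \<zeta>^K) \<le> 2"
    using norm_triangle_ineq4[of 1 "\<zeta>^K"] assms by (simp add: norm_power)
  ultimately show ?thesis using assms
    by (simp add: divide_right_mono)
qed

lemma avg_exists:
  fixes C :: "('g::ab_group_add \<Rightarrow> complex) set" and \<epsilon> :: real
  assumes "finite C" "\<forall>\<kappa>\<in>C. ischr \<kappa>" "\<epsilon> > 0"
  shows "\<exists>ys::'g list. ys \<noteq> [] \<and> (\<forall>\<kappa>\<in>C. (\<exists>x. \<kappa> x \<noteq> 1) \<longrightarrow>
           norm (sum_list (map \<kappa> ys)) \<le> \<epsilon> * real (length ys))"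
  using assms
proof (induction C rule: finite_induct)
  case empty
  then show ?case by (intro exI[of _ "[0]"]) auto
next
  case (insert \<kappa> C)
  then obtain ys where ys: "ys \<noteq> []" and
    ysC: "\<forall>\<psi>\<in>C. (\<exists>x. \<psi> x \<noteq> 1) \<longrightarrow> norm (sum_list (map \<psi> ys)) \<le> \<epsilon> * real (length ys)"
    by auto
  have chi: "ischr \<kappa>" using insert by auto
  show ?case
  proof (cases "\<exists>x. \<kappa> x \<noteq> 1")
    case False
    then show ?thesis using ys ysC by auto
  next
    case True
    then obtain x where x: "\<kappa> x \<noteq> 1" by auto
    define \<zeta> where "\<zeta> = \<kappa> x"
    have nz: "norm \<zeta> = 1" using chi unfolding ischr_def \<zeta>_def by auto
    have d: "norm (1 - \<zeta>) > 0" using x by (simp add: \<zeta>_def)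
    define K where "K = nat \<lceil>2 / (\<epsilon> * norm (1 - \<zeta>))\<rceil> + 1"
    have K1: "K \<ge> 1" by (simp add: K_def)
    have "2 / (\<epsilon> * norm (1 - \<zeta>)) \<le> real K"
      unfolding K_def by linarith
    then have K2: "2 / norm (1 - \<zeta>) \<le> \<epsilon> * real K"
      using d \<open>\<epsilon> > 0\<close> by (simp add: field_simps)
    define kx where "kx k = (\<Sum>i<k. x)" for k :: nat
    define ys' where "ys' = concat (map (\<lambda>k. map (\<lambda>y. y + kx k) ys) [0..<K])"
    have len: "length ys' = K * length ys"
      unfolding ys'_def by (simp add: length_concat comp_def sum_list_triv)
    have sumeq: "sum_list (map \<psi> ys') = sum_list (map \<psi> ys) * (\<Sum>k<K. (\<psi> x)^k)"
      if "ischr \<psi>" for \<psi>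
    proof -
      have "\<psi> (y + kx k) = \<psi> x ^ k * \<psi> y" for y k
        using that ischr_sum[OF that, of "\<lambda>_. x" "{..<k}"] unfolding ischr_def kx_def by simp
      then have "sum_list (map \<psi> ys') = sum_list (map (\<lambda>k. \<psi> x ^ k * sum_list (map \<psi> ys)) [0..<K])"
        unfolding ys'_def by (simp add: map_concat sum_list_concat' comp_def sum_list_const_mult)
      also have "\<dots> = (\<Sum>k<K. \<psi> x ^ k * sum_list (map \<psi> ys))"
        by (simp add: sum_set_upt_conv_sum_list_nat[symmetric] atLeast0LessThan)
      finally show ?thesis by (simp add: sum_distrib_left mult.commute)
    qed
    have nzK: "norm (\<Sum>k<K. (\<psi> x)^k) \<le> real K" if "ischr \<psi>" for \<psi>
    proof -
      have "norm (\<Sum>k<K. (\<psi> x)^k) \<le> (\<Sum>k<K. norm ((\<psi> x)^k))" by (rule norm_sum)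
      also have "\<dots> = real K" using that unfolding ischr_def by (simp add: norm_power)
      finally show ?thesis .
    qed
    have nsum: "norm (sum_list (map \<psi> ys)) \<le> real (length ys)" if "ischr \<psi>" for \<psi>
    proof -
      have "norm (sum_list (map \<psi> ys)) \<le> sum_list (map (\<lambda>y. norm (\<psi> y)) ys)"
        by (rule norm_sum_list_le')
      also have "\<dots> = real (length ys)" using that unfolding ischr_def by (simp add: sum_list_triv)
      finally show ?thesis .
    qed
    show ?thesis
    proof (intro exI[of _ ys'] conjI ballI impI)
      show "ys' \<noteq> []" using len ys K1 by auto
    next
      fix \<psi> assume \<psi>: "\<psi> \<in> insert \<kappa> C" "\<exists>x. \<psi> x \<noteq> 1"
      have cp: "ischr \<psi>" using \<psi> insert by auto
      show "norm (sum_list (map \<psi> ys')) \<le> \<epsilon> * real (length ys')"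
      proof (cases "\<psi> = \<kappa>")
        case True
        have "norm (sum_list (map \<psi> ys')) = norm (sum_list (map \<psi> ys)) * norm (\<Sum>k<K. \<zeta>^k)"
          using sumeq[OF cp] True by (simp add: \<zeta>_def norm_mult)
        also have "\<dots> \<le> real (length ys) * (\<epsilon> * real K)"
          using geom_bound[OF nz, of K] x K2 nsum[OF cp]
          by (intro mult_mono) (auto simp: \<zeta>_def)
        finally show ?thesis using len by (simp add: algebra_simps)
      next
        case False
        then have "\<psi> \<in> C" using \<psi> by auto
        then have b: "norm (sum_list (map \<psi> ys)) \<le> \<epsilon> * real (length ys)" using ysC \<psi> by auto
        have "norm (sum_list (map \<psi> ys')) = norm (sum_list (map \<psi> ys)) * norm (\<Sum>k<K. (\<psi> x)^k)"
          using sumeq[OF cp] by (simp add: norm_mult)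
        also have "\<dots> \<le> (\<epsilon> * real (length ys)) * real K"
          using b nzK[OF cp] insert.prems(2) by (intro mult_mono) auto
        finally show ?thesis using len by (simp add: algebra_simps)
      qed
    qed
  qed
qed
lemma pigeon_pairs:
  assumes A: "finite A" and fB: "f ` A \<subseteq> B" and B: "finite B"
  shows "real (card A) ^ 2 \<le> real (card {p \<in> A \<times> A. f (fst p) = f (snd p)}) * real (card B)"
proof -
  define c where "c b = card {a \<in> A. f a = b}" for b
  have "card {p \<in> A \<times> A. f (fst p) = f (snd p)} = (\<Sum>p\<in>A \<times> A. if f (fst p) = f (snd p) then 1 else (0::nat))"
    using A by (simp add: sum.If_cases Int_def)
  also have "\<dots> = (\<Sum>a\<in>A. \<Sum>a'\<in>A. if f a = f a' then 1 else 0)"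
    by (simp add: sum.cartesian_product case_prod_beta)
  also have "\<dots> = (\<Sum>a\<in>A. c (f a))"
    using A by (simp add: sum.If_cases Int_def c_def eq_commute conj_commute)
  also have "\<dots> = (\<Sum>b\<in>f ` A. \<Sum>a\<in>{a\<in>A. f a = b}. c (f a))"
    using A by (rule sum.image_gen)
  also have "\<dots> = (\<Sum>b\<in>f ` A. c b * c b)"
    by (intro sum.cong refl) (simp add: c_def)
  finally have e1: "card {p \<in> A \<times> A. f (fst p) = f (snd p)} = (\<Sum>b\<in>f ` A. c b * c b)" .
  have e2: "card A = (\<Sum>b\<in>f ` A. c b)"
  proof -
    have "card A = (\<Sum>a\<in>A. 1::nat)" by simp
    also have "\<dots> = (\<Sum>b\<in>f ` A. \<Sum>a\<in>{a\<in>A. f a = b}. 1)"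
      using A by (rule sum.image_gen)
    finally show ?thesis by (simp add: c_def)
  qed
  have "real (card A) ^ 2 = (\<Sum>b\<in>f ` A. real (c b))^2" by (simp add: e2)
  also have "\<dots> \<le> (\<Sum>b\<in>f ` A. (real (c b))^2) * card (f ` A)"
    by (rule sum_squared_le_sum_of_squares)
  also have "\<dots> \<le> (\<Sum>b\<in>f ` A. (real (c b))^2) * card B"
    using card_mono[OF B fB] by (intro mult_left_mono) (auto intro: sum_nonneg)
  also have "(\<Sum>b\<in>f ` A. (real (c b))^2) = real (card {p \<in> A \<times> A. f (fst p) = f (snd p)})"
    by (simp add: e1 power2_eq_square)
  finally show ?thesis .
qed

lemma prod_count:
  fixes f :: "'j \<Rightarrow> 'a::comm_monoid_mult"
  assumes "finite K" "finite J" "s ` K \<subseteq> J"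
  shows "(\<Prod>k\<in>K. f (s k)) = (\<Prod>j\<in>J. f j ^ card {k\<in>K. s k = j})"
proof -
  have "(\<Prod>k\<in>K. f (s k)) = (\<Prod>k\<in>K. \<Prod>j\<in>J. if s k = j then f j else 1)"
    using assms by (intro prod.cong refl) (auto simp: prod.delta)
  also have "\<dots> = (\<Prod>j\<in>J. \<Prod>k\<in>K. if s k = j then f j else 1)"
    by (rule prod.swap)
  also have "\<dots> = (\<Prod>j\<in>J. f j ^ card {k\<in>K. s k = j})"
    using assms by (intro prod.cong refl) (simp add: prod.If_cases Int_def)
  finally show ?thesis .
qed

lemma unit_powi:
  fixes g t :: complex assumes "norm g = 1" "norm t = 1"
  shows "(g * cnj t)^a * cnj (g * cnj t)^b = g powi (int a - int b) * cnj (t powi (int a - int b))"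
proof -
  have cg: "cnj g = inverse g" and ct: "cnj t = inverse t"
  proof -
    have "g * cnj g = 1" "t * cnj t = 1" using assms complex_norm_square[of g] complex_norm_square[of t] by auto
    then show "cnj g = inverse g" "cnj t = inverse t" by (metis inverse_unique)+
  qed
  have g0: "g \<noteq> 0" and t0: "t \<noteq> 0" using assms by auto
  define z where "z = g / t"
  have z0: "z \<noteq> 0" using g0 t0 by (simp add: z_def)
  have l: "(g * cnj t)^a * cnj (g * cnj t)^b = z^a * inverse z ^ b"
    by (simp add: cg ct z_def divide_inverse)
  have "g powi (int a - int b) * cnj (t powi (int a - int b)) = g powi (int a - int b) * inverse (t powi (int a - int b))"
    by (simp add: ct power_int_inverse)
  also have "\<dots> = z powi (int a - int b)"
    unfolding z_def power_int_divide_distrib by (simp add: divide_inverse)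
  also have "\<dots> = z^a / z^b" using z0 by (simp add: power_int_diff)
  finally show ?thesis using l by (simp add: divide_inverse power_inverse)
qed
lemma poly_geom_lim:
  fixes q :: real assumes q0: "0 \<le> q" and q1: "q < 1"
  shows "(\<lambda>M. (1 + real M)^n * q^M) \<longlonglongrightarrow> 0"
proof -
  define c where "c = (1 + q) / 2"
  have c1: "c < 1" and qc: "q < c" using q1 by (auto simp: c_def)
  have "(\<lambda>M. (1 + inverse (real (Suc M)))^n * q) \<longlonglongrightarrow> (1 + 0)^n * q"
    by (intro tendsto_intros LIMSEQ_inverse_real_of_nat)
  then have "eventually (\<lambda>M. (1 + inverse (real (Suc M)))^n * q < c) sequentially"
    using qc by (intro order_tendstoD) auto
  then obtain N where N: "\<And>M. M \<ge> N \<Longrightarrow> (1 + inverse (real (Suc M)))^n * q < c"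
    by (auto simp: eventually_sequentially)
  have "summable (\<lambda>M. (1 + real M)^n * q^M)"
  proof (rule summable_ratio_test[OF c1])
    fix M assume "M \<ge> N"
    have eq: "1 + real (Suc M) = (1 + inverse (real (Suc M))) * (1 + real M)"
      by (simp add: field_simps)
    have "norm ((1 + real (Suc M))^n * q^Suc M) = ((1 + inverse (real (Suc M)))^n * q) * ((1 + real M)^n * q^M)"
    proof -
      have "(1 + real (Suc M))^n = (1 + inverse (real (Suc M)))^n * (1 + real M)^n"
        by (subst eq) (simp add: power_mult_distrib)
      then show ?thesis using q0 by simp
    qed
    also have "\<dots> \<le> c * ((1 + real M)^n * q^M)"
      using N[OF \<open>M \<ge> N\<close>] q0 by (intro mult_right_mono) auto
    finally show "norm ((1 + real (Suc M))^n * q^Suc M) \<le> c * norm ((1 + real M)^n * q^M)"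
      using q0 by simp
  qed
  then show ?thesis by (rule summable_LIMSEQ_zero)
qed
lemma one_plus_bound:
  fixes w :: complex assumes "norm w = 1"
  shows "norm (1 + w) \<le> 2 - (norm (1 - w))^2 / 4"
proof -
  have par: "(norm (1 + w))^2 + (norm (1 - w))^2 = 4"
  proof -
    have "(Re w)^2 + (Im w)^2 = 1" using assms cmod_power2[of w] by simp
    then show ?thesis unfolding cmod_power2 by (simp add: power2_eq_square algebra_simps)
  qed
  define u where "u = (norm (1 - w))^2"
  have z: "0 \<le> (norm (1 + w))^2" "0 \<le> (norm (1 - w))^2" by simp_all
  have u0: "0 \<le> u" "u \<le> 4" using par z unfolding u_def by linarith+
  have "(norm (1 + w))^2 \<le> (2 - u/4)^2"
  proof -
    have a: "(norm (1 + w))^2 = 4 - u" using par unfolding u_def by linarith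
    have b: "(2 - u/4)^2 = 4 - u + u^2/16" by (simp add: power2_eq_square algebra_simps)
    have "0 \<le> u^2/16" by simp
    then show ?thesis using a b by linarith
  qed
  moreover have "0 \<le> 2 - u/4" using u0 by simp
  ultimately have "norm (1 + w) \<le> 2 - u/4" by (rule power2_le_imp_le)
  then show ?thesis unfolding u_def .
qed



lemma character_props:
  assumes "character \<gamma>"
  shows "ischr \<gamma>" "continuous_on UNIV \<gamma>" "norm (\<gamma> x) = 1"
  using assms unfolding character_def ischr_def by auto

lemma ischr_prod_powi:
  assumes "\<And>i. i \<in> I \<Longrightarrow> ischr (\<gamma> i)"
  shows "ischr (\<lambda>x. \<Prod>i\<in>I. \<gamma> i x powi e i)"
  using assms unfolding ischr_def
  by (auto simp: prod_norm[symmetric] norm_power_int power_int_mult_distrib prod.distrib)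

lemma finite_solve:
  fixes \<gamma> :: "nat \<Rightarrow> ('g::{topological_ab_group_add,t2_space} \<Rightarrow> complex)" and t :: "nat \<Rightarrow> complex"
  assumes cpt: "compact (UNIV :: 'g set)"
    and ch: "\<And>i. i < n \<Longrightarrow> character (\<gamma> i)"
    and tn: "\<And>i. i < n \<Longrightarrow> norm (t i) = 1"
    and rel: "\<And>e. (\<forall>x. (\<Prod>i<n. \<gamma> i x powi e i) = 1) \<Longrightarrow> (\<Prod>i<n. t i powi e i) = 1"
  shows "\<exists>x. \<forall>i<n. \<gamma> i x = t i"
proof (rule ccontr)
  assume H: "\<not> ?thesis"
  have npos: "n > 0" using H by (cases n) auto
  have gn: "norm (\<gamma> i x) = 1" if "i < n" for i x using character_props[OF ch[OF that]] by simp
  define D where "D x = (\<Sum>i<n. (norm (t i - \<gamma> i x))^2)" for x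
  have Dc: "continuous_on UNIV D"
    unfolding D_def using character_props(2)[OF ch] by (intro continuous_intros) auto
  obtain x0 where x0: "\<And>y. D x0 \<le> D y"
    using continuous_attains_inf[OF cpt UNIV_not_empty Dc] by auto
  define \<delta> where "\<delta> = D x0"
  have \<delta>pos: "\<delta> > 0"
  proof -
    have "\<delta> \<ge> 0" unfolding \<delta>_def D_def by (intro sum_nonneg) auto
    moreover have "\<delta> \<noteq> 0"
    proof
      assume "\<delta> = 0"
      then have "\<forall>i\<in>{..<n}. (norm (t i - \<gamma> i x0))^2 = 0"
        unfolding \<delta>_def D_def by (subst sum_nonneg_eq_0_iff[symmetric]) auto
      then have "\<forall>i<n. \<gamma> i x0 = t i" by auto
      then show False using H by auto
    qed
    ultimately show ?thesis by simp
  qed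
  define w where "w i x = \<gamma> i x * cnj (t i)" for i x
  have wn: "norm (w i x) = 1" if "i < n" for i x
    using gn[OF that] tn[OF that] by (simp add: w_def norm_mult)
  have w1: "norm (1 - w i x) = norm (t i - \<gamma> i x)" if "i < n" for i x
  proof -
    have "t i - \<gamma> i x = t i * (1 - w i x)"
      using tn[OF that] complex_norm_square[of "t i"] by (simp add: w_def algebra_simps)
    then show ?thesis using tn[OF that] by (simp add: norm_mult)
  qed
  define P where "P x = (\<Sum>i<n. w i x) + of_nat n" for x
  define b where "b = 2 * real n - \<delta> / 4"
  have Pb: "norm (P x) \<le> b" for x
  proof -
    have "P x = (\<Sum>i<n. 1 + w i x)" by (simp add: P_def sum.distrib)
    then have "norm (P x) \<le> (\<Sum>i<n. norm (1 + w i x))" by (simp add: norm_sum)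
    also have "\<dots> \<le> (\<Sum>i<n. 2 - (norm (t i - \<gamma> i x))^2 / 4)"
      using one_plus_bound[OF wn] w1 by (intro sum_mono) auto
    also have "\<dots> = 2 * real n - D x / 4"
      by (simp add: D_def sum_subtractf sum_divide_distrib)
    also have "\<dots> \<le> b" using x0[of x] by (simp add: b_def \<delta>_def)
    finally show ?thesis .
  qed
  have b0: "b \<ge> 0" using Pb[of x0] norm_ge_zero[of "P x0"] by linarith
  define q where "q = (b / (2 * real n))^2"
  have q0: "0 \<le> q" by (simp add: q_def)
  have q1: "q < 1"
  proof -
    have "b / (2 * real n) < 1" using \<delta>pos npos by (simp add: b_def field_simps)
    moreover have "0 \<le> b / (2 * real n)" using b0 by simp
    ultimately show ?thesis unfolding q_def by (simp add: power_less_one_iff abs_square_less_1)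
  qed
  have "eventually (\<lambda>M. (1 + real M)^n * q^M < 1/2) sequentially"
    using poly_geom_lim[OF q0 q1, of n] by (intro order_tendstoD) auto
  then obtain M where M: "(1 + real M)^n * q^M < 1/2"
    by (auto simp: eventually_sequentially)
  define A where "A = PiE {..<M} (\<lambda>_. {..<2*n})"
  have finA: "finite A" by (simp add: A_def finite_PiE)
  have cardA: "card A = (2*n)^M" by (simp add: A_def card_PiE)
  define u where "u j x = (if j < n then w j x else 1)" for j x
  define V where "V s = (\<lambda>i\<in>{..<n}. card {k\<in>{..<M}. s k = i})" for s :: "nat \<Rightarrow> nat"
  define mon where "mon s x = (\<Prod>i<n. w i x ^ V s i)" for s x
  have Pu: "P x = (\<Sum>j<2*n. u j x)" for x
  proof -
    have "{..<2*n} = {..<n} \<union> {n..<2*n}" by auto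
    then have "(\<Sum>j<2*n. u j x) = (\<Sum>j\<in>{..<n} \<union> {n..<2*n}. u j x)" by simp
    also have "\<dots> = (\<Sum>j<n. u j x) + (\<Sum>j\<in>{n..<2*n}. u j x)"
      by (rule sum.union_disjoint) auto
    also have "\<dots> = (\<Sum>j<n. w j x) + of_nat n" by (simp add: u_def)
    finally show ?thesis by (simp add: P_def)
  qed
  have Pexp: "P x ^ M = (\<Sum>s\<in>A. mon s x)" for x
  proof -
    have "P x ^ M = (\<Prod>k<M. \<Sum>j<2*n. u j x)" by (simp add: Pu)
    also have "\<dots> = (\<Sum>s\<in>A. \<Prod>k<M. u (s k) x)" unfolding A_def by (rule prod_sum_PiE) auto
    also have "\<dots> = (\<Sum>s\<in>A. mon s x)"
    proof (rule sum.cong[OF refl])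
      fix s assume s: "s \<in> A"
      have "(\<Prod>k<M. u (s k) x) = (\<Prod>j<2*n. u j x ^ card {k\<in>{..<M}. s k = j})"
        using s by (intro prod_count) (auto simp: A_def PiE_def Pi_def)
      also have "\<dots> = (\<Prod>j<n. u j x ^ card {k\<in>{..<M}. s k = j})"
        by (rule prod.mono_neutral_right) (auto simp: u_def)
      also have "\<dots> = mon s x" by (simp add: mon_def u_def V_def)
      finally show "(\<Prod>k<M. u (s k) x) = mon s x" .
    qed
    finally show ?thesis .
  qed
  define d where "d s s' = (\<lambda>i. int (V s i) - int (V s' i))" for s s'
  define chi where "chi e x = (\<Prod>i<n. \<gamma> i x powi e i)" for e x
  define tau where "tau e = (\<Prod>i<n. t i powi e i)" for e
  have monc: "mon s x * cnj (mon s' x) = chi (d s s') x * cnj (tau (d s s'))" for s s' x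
  proof -
    have "mon s x * cnj (mon s' x) = (\<Prod>i<n. (\<gamma> i x * cnj (t i))^V s i * cnj (\<gamma> i x * cnj (t i))^V s' i)"
      by (simp add: mon_def w_def prod.distrib)
    also have "\<dots> = (\<Prod>i<n. \<gamma> i x powi d s s' i * cnj (t i powi d s s' i))"
      using unit_powi gn tn by (intro prod.cong) (auto simp: d_def)
    also have "\<dots> = chi (d s s') x * cnj (tau (d s s'))"
      by (simp add: chi_def tau_def prod.distrib)
    finally show ?thesis .
  qed
  have normsq: "complex_of_real ((norm (P x))^(2*M)) =
      (\<Sum>p\<in>A\<times>A. chi (d (fst p) (snd p)) x * cnj (tau (d (fst p) (snd p))))" for x
  proof -
    have "complex_of_real ((norm (P x))^(2*M)) = complex_of_real ((norm (P x ^ M))^2)"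
      by (simp add: norm_power power_mult[symmetric] mult.commute)
    also have "\<dots> = P x ^ M * cnj (P x ^ M)" by (rule complex_norm_square)
    also have "\<dots> = (\<Sum>s\<in>A. \<Sum>s'\<in>A. mon s x * cnj (mon s' x))"
      by (simp add: Pexp sum_product del: cnj_prod)
    also have "\<dots> = (\<Sum>p\<in>A\<times>A. mon (fst p) x * cnj (mon (snd p) x))"
      by (simp add: sum.cartesian_product case_prod_beta del: cnj_prod)
    also have "\<dots> = (\<Sum>p\<in>A\<times>A. chi (d (fst p) (snd p)) x * cnj (tau (d (fst p) (snd p))))"
      by (simp only: monc)
    finally show ?thesis .
  qed
  define C where "C = (\<lambda>p. chi (d (fst p) (snd p))) ` (A \<times> A)"
  have finC: "finite C" using finA by (simp add: C_def)
  have chC: "\<forall>\<kappa>\<in>C. ischr \<kappa>"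
  proof
    fix \<kappa> assume "\<kappa> \<in> C"
    then obtain e where "\<kappa> = chi e" by (auto simp: C_def)
    then show "ischr \<kappa>" unfolding chi_def
      using character_props(1)[OF ch] ischr_prod_powi[of "{..<n}" \<gamma> e] by auto
  qed
  define \<epsilon> where "\<epsilon> = 1 / (2 * (1 + real M)^n)"
  have \<epsilon>0: "\<epsilon> > 0" by (simp add: \<epsilon>_def)
  obtain ys where ys: "ys \<noteq> []" and
    ysb: "\<forall>\<kappa>\<in>C. (\<exists>x. \<kappa> x \<noteq> 1) \<longrightarrow> norm (sum_list (map \<kappa> ys)) \<le> \<epsilon> * real (length ys)"
    using avg_exists[OF finC chC \<epsilon>0] by blast
  define R where "R = length ys"
  have R0: "R > 0" using ys by (simp add: R_def)
  define Y where "Y f = (\<Sum>i<R. f (ys ! i))" for f :: "'g \<Rightarrow> complex"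
  have sumlist: "sum_list (map f ys) = Y f" for f
    by (simp add: Y_def R_def sum_list_sum_nth atLeast0LessThan)
  define T1 where "T1 = {p\<in>A\<times>A. \<forall>x. chi (d (fst p) (snd p)) x = 1}"
  define T2 where "T2 = A\<times>A - T1"
  define F where "F p = cnj (tau (d (fst p) (snd p))) * Y (chi (d (fst p) (snd p)))" for p
  define Sr where "Sr = (\<Sum>i<R. (norm (P (ys!i)))^(2*M))"
  have upper: "Sr \<le> real R * b^(2*M)"
  proof -
    have "Sr \<le> (\<Sum>i<R. b^(2*M))" unfolding Sr_def
      using Pb by (intro sum_mono power_mono) auto
    then show ?thesis by simp
  qed
  have eqS: "complex_of_real Sr = (\<Sum>p\<in>A\<times>A. F p)"
  proof -
    have "complex_of_real Sr = (\<Sum>i<R. \<Sum>p\<in>A\<times>A. chi (d (fst p) (snd p)) (ys!i) * cnj (tau (d (fst p) (snd p))))"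
      unfolding Sr_def of_real_sum by (simp only: normsq)
    also have "\<dots> = (\<Sum>p\<in>A\<times>A. \<Sum>i<R. chi (d (fst p) (snd p)) (ys!i) * cnj (tau (d (fst p) (snd p))))"
      by (rule sum.swap)
    also have "\<dots> = (\<Sum>p\<in>A\<times>A. F p)"
      by (simp add: F_def Y_def sum_distrib_left sum_distrib_right mult.commute del: cnj_prod)
    finally show ?thesis .
  qed
  have fin2: "finite (A \<times> A)" using finA by simp
  have T1sub: "T1 \<subseteq> A\<times>A" by (auto simp: T1_def)
  have splitS: "(\<Sum>p\<in>A\<times>A. F p) = (\<Sum>p\<in>T1. F p) + (\<Sum>p\<in>T2. F p)"
    unfolding T2_def using fin2 T1sub by (metis sum.subset_diff add.commute)
  have T1v: "(\<Sum>p\<in>T1. F p) = of_nat (card T1) * of_nat R"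
  proof -
    have "F p = of_nat R" if "p \<in> T1" for p
    proof -
      have c1: "\<forall>x. chi (d (fst p) (snd p)) x = 1" using that by (auto simp: T1_def)
      then have "tau (d (fst p) (snd p)) = 1" unfolding tau_def using rel c1 by (simp add: chi_def)
      moreover have "Y (chi (d (fst p) (snd p))) = of_nat R" using c1 by (simp add: Y_def)
      ultimately show ?thesis by (simp add: F_def)
    qed
    then show ?thesis by simp
  qed
  have taun: "norm (tau e) = 1" for e
    unfolding tau_def using tn by (simp add: prod_norm[symmetric] norm_power_int)
  have T2b: "norm (\<Sum>p\<in>T2. F p) \<le> real (card T2) * (\<epsilon> * real R)"
  proof -
    have "norm (F p) \<le> \<epsilon> * real R" if "p \<in> T2" for p
    proof -
      have "chi (d (fst p) (snd p)) \<in> C" "\<exists>x. chi (d (fst p) (snd p)) x \<noteq> 1"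
        using that by (auto simp: T2_def T1_def C_def)
      then have "norm (Y (chi (d (fst p) (snd p)))) \<le> \<epsilon> * real R"
        using ysb by (auto simp: sumlist R_def)
      then show ?thesis by (simp add: F_def norm_mult taun del: cnj_prod)
    qed
    then have "norm (\<Sum>p\<in>T2. F p) \<le> (\<Sum>p\<in>T2. \<epsilon> * real R)"
      by (intro order_trans[OF norm_sum] sum_mono) auto
    then show ?thesis by simp
  qed
  have cT2: "card T2 \<le> card A ^ 2"
  proof -
    have "card T2 \<le> card (A \<times> A)" unfolding T2_def using fin2 by (intro card_mono) auto
    then show ?thesis by (simp add: card_cartesian_product power2_eq_square)
  qed
  have key: "real (card T1) \<le> b^(2*M) + real (card A ^ 2) * \<epsilon>"
  proof -
    have "complex_of_real (real (card T1) * real R) = complex_of_real Sr - (\<Sum>p\<in>T2. F p)"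
      using eqS splitS T1v by simp
    then have "real (card T1) * real R = norm (complex_of_real Sr - (\<Sum>p\<in>T2. F p))"
      by (metis norm_of_real abs_of_nonneg of_nat_0_le_iff mult_nonneg_nonneg)
    also have "\<dots> \<le> norm (complex_of_real Sr) + norm (\<Sum>p\<in>T2. F p)" by (rule norm_triangle_ineq4)
    also have "\<dots> \<le> real R * b^(2*M) + real (card T2) * (\<epsilon> * real R)"
    proof -
      have "Sr \<ge> 0" unfolding Sr_def by (intro sum_nonneg) auto
      then show ?thesis using upper T2b by simp
    qed
    also have "\<dots> \<le> real R * b^(2*M) + real (card A ^ 2) * (\<epsilon> * real R)"
      using cT2 \<epsilon>0 R0 by (intro add_left_mono mult_right_mono) (auto simp del: of_nat_power)
    finally have "real (card T1) * real R \<le> (b^(2*M) + real (card A ^ 2) * \<epsilon>) * real R"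
      by (simp add: algebra_simps)
    then show ?thesis using R0 by simp
  qed
  define B where "B = PiE {..<n} (\<lambda>_. {..M})"
  have VB: "V ` A \<subseteq> B"
  proof -
    have "card {k\<in>{..<M}. s k = i} \<le> M" for s :: "nat \<Rightarrow> nat" and i
      using card_mono[of "{..<M}" "{k\<in>{..<M}. s k = i}"] by auto
    then show ?thesis by (auto simp: V_def B_def split: if_splits)
  qed
  have cardB: "card B = (1 + M)^n" by (simp add: B_def card_PiE)
  have finB: "finite B" by (simp add: B_def finite_PiE)
  have pig: "real (card A) ^ 2 \<le> real (card {p \<in> A \<times> A. V (fst p) = V (snd p)}) * real (card B)"
    by (rule pigeon_pairs[OF finA VB finB])
  have subT1: "{p \<in> A \<times> A. V (fst p) = V (snd p)} \<subseteq> T1"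
    by (auto simp: T1_def chi_def d_def)
  have lower: "real (card A) ^ 2 \<le> real (card T1) * (1 + real M)^n"
  proof -
    have "card {p \<in> A \<times> A. V (fst p) = V (snd p)} \<le> card T1"
      using subT1 fin2 T1sub by (intro card_mono) (auto intro: finite_subset)
    then have m: "real (card {p \<in> A \<times> A. V (fst p) = V (snd p)}) * (1 + real M)^n \<le> real (card T1) * (1 + real M)^n"
      by (intro mult_right_mono) auto
    have pig': "real (card A) ^ 2 \<le> real (card {p \<in> A \<times> A. V (fst p) = V (snd p)}) * (1 + real M)^n"
      using pig cardB by simp
    show ?thesis using m pig' by linarith
  qed
  define a where "a = real (card A)"
  have a0: "a > 0" using npos by (simp add: a_def cardA)
  have bq: "b^(2*M) = q^M * a^2"
  proof -
    define r where "r = b / (2 * real n)"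
    have br: "b = r * (2 * real n)" using npos by (simp add: r_def)
    have "b^(2*M) = r^(2*M) * (2 * real n)^(2*M)" by (simp add: br power_mult_distrib)
    also have "r^(2*M) = q^M" by (simp add: q_def r_def power_mult)
    also have "(2 * real n)^(2*M) = a^2"
    proof -
      have e1: "(2 * real n)^(2*M) = ((2 * real n)^M)^2" by (simp only: power_mult[symmetric] mult.commute)
      have e2: "a = (2 * real n)^M" by (simp add: a_def cardA)
      show ?thesis by (simp only: e1 e2)
    qed
    finally show ?thesis .
  qed
  have K: "(1 + real M)^n > 0" by simp
  have k2: "real (card T1) \<le> q^M * a^2 + a^2 * \<epsilon>" using key bq by (simp add: a_def)
  have lower': "a^2 \<le> real (card T1) * (1 + real M)^n" using lower by (simp add: a_def)
  have "a^2 \<le> (q^M * a^2 + a^2 * \<epsilon>) * (1 + real M)^n"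
    using order_trans[OF lower' mult_right_mono[OF k2 less_imp_le[OF K]]] .
  then have "a^2 \<le> a^2 * (q^M * (1 + real M)^n) + a^2 / 2"
    by (simp add: \<epsilon>_def algebra_simps)
  then have "1 \<le> q^M * (1 + real M)^n + 1/2" using a0
    by (simp add: field_simps)
  then show False using M by (simp add: mult.commute)
qed

lemma omega_pow_N:
  assumes "N \<ge> 1" shows "exp (2 * pi * \<i> / of_nat N) ^ N = 1"
proof -
  have "exp (2 * pi * \<i> / of_nat N) ^ N = exp (of_nat N * (2 * pi * \<i> / of_nat N))"
    by (rule exp_of_nat_mult[symmetric])
  also have "of_nat N * (2 * pi * \<i> / of_nat N) = 2 * pi * \<i>" using assms by simp
  finally show ?thesis by simp
qed

lemma omega_dvd:
  assumes N: "N \<ge> 1" and h: "exp (2 * pi * \<i> / of_nat N) powi k = 1"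
  shows "int N dvd k"
proof -
  have "exp (of_int k * (2 * pi * \<i> / of_nat N)) = 1" using h by (simp add: exp_power_int)
  then obtain j :: int where j: "Im (of_int k * (2 * pi * \<i> / of_nat N)) = of_int (2 * j) * pi"
    by (auto simp: exp_eq_1)
  have "Im (of_int k * (2 * pi * \<i> / of_nat N)) = of_int k * 2 * pi / of_nat N"
    using N by (simp add: Im_divide power2_eq_square)
  with j have "of_int k * 2 * pi / of_nat N = of_int (2 * j) * pi" by simp
  then have "real_of_int k = of_int j * of_nat N" using N by (simp add: field_simps)
  then have "k = j * int N" by (metis of_int_eq_iff of_int_mult of_int_of_nat_eq)
  then show ?thesis by simp
qed

lemma root_powi_dvd:
  fixes z :: complex assumes "z ^ N = 1" "int N dvd k" shows "z powi k = 1"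
proof -
  obtain j where k: "k = int N * j" using assms(2) by (elim dvdE)
  have "z powi k = (z powi int N) powi j" unfolding k by (rule power_int_mult)
  also have "z powi int N = 1" using assms(1) by simp
  finally show ?thesis by simp
qed

lemma root_norm:
  fixes z :: complex assumes "z ^ N = 1" "N \<ge> 1" shows "norm z = 1"
proof -
  have h: "norm z ^ N = 1 ^ N" by (simp add: norm_power[symmetric] assms(1))
  show ?thesis using power_eq_imp_eq_base[OF h norm_ge_zero zero_le_one] assms(2) by simp
qed

theorem theorem2p4:
  fixes E :: "('g::{topological_ab_group_add, t2_space} \<Rightarrow> complex) set"
    and N :: nat
  assumes "compact (UNIV :: 'g set)"
    and "N \<ge> 1"
    and "E \<subseteq> dual_group"
  shows "N_PR N E \<longleftrightarrow>
    (\<forall>(n::nat) (\<gamma>::nat \<Rightarrow> ('g \<Rightarrow> complex)) (m::nat \<Rightarrow> int).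
       inj_on \<gamma> {..<n} \<and> \<gamma> ` {..<n} \<subseteq> E \<and>
       (\<forall>x. (\<Prod>i<n. (\<gamma> i x) powi (m i)) = 1)
       \<longrightarrow> (\<forall>i<n. int N dvd m i))"
proof
  assume PR: "N_PR N E"
  show "\<forall>(n::nat) (\<gamma>::nat \<Rightarrow> ('g \<Rightarrow> complex)) (m::nat \<Rightarrow> int).
       inj_on \<gamma> {..<n} \<and> \<gamma> ` {..<n} \<subseteq> E \<and>
       (\<forall>x. (\<Prod>i<n. (\<gamma> i x) powi (m i)) = 1)
       \<longrightarrow> (\<forall>i<n. int N dvd m i)"
  proof (intro allI impI)
    fix n :: nat and \<gamma> :: "nat \<Rightarrow> 'g \<Rightarrow> complex" and m :: "nat \<Rightarrow> int" and j :: nat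
    assume hyp: "inj_on \<gamma> {..<n} \<and> \<gamma> ` {..<n} \<subseteq> E \<and> (\<forall>x. (\<Prod>i<n. (\<gamma> i x) powi (m i)) = 1)"
      and j: "j < n"
    define \<omega> where "\<omega> = exp (2 * pi * \<i> / of_nat N)"
    define \<phi> where "\<phi> g = (if g = \<gamma> j then \<omega> else 1)" for g :: "'g \<Rightarrow> complex"
    have om: "\<omega> ^ N = 1" using omega_pow_N[OF assms(2)] unfolding \<omega>_def .
    have "\<forall>g\<in>E. \<phi> g \<in> roots_of_unity N"
      using om by (simp add: \<phi>_def roots_of_unity_def)
    then obtain x where x: "\<forall>g\<in>E. \<phi> g = g x" using PR[unfolded N_PR_def, rule_format, of \<phi>] by blast
    have gx: "\<gamma> i x = (if i = j then \<omega> else 1)" if "i < n" for i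
    proof -
      have "\<gamma> i \<in> E" using hyp that by auto
      then have "\<gamma> i x = \<phi> (\<gamma> i)" using x by auto
      moreover have "\<gamma> i = \<gamma> j \<longleftrightarrow> i = j" using inj_onD[of \<gamma> "{..<n}" i j] hyp that j by auto
      ultimately show ?thesis by (simp add: \<phi>_def)
    qed
    have "(\<Prod>i<n. (\<gamma> i x) powi (m i)) = (\<Prod>i<n. if i = j then \<omega> powi m j else 1)"
      using gx by (intro prod.cong) auto
    also have "\<dots> = \<omega> powi m j" using j by simp
    finally have "\<omega> powi m j = 1" using hyp by simp
    then show "int N dvd m j" using omega_dvd[OF assms(2)] by (simp add: \<omega>_def)
  qed
next
  assume R: "\<forall>(n::nat) (\<gamma>::nat \<Rightarrow> ('g \<Rightarrow> complex)) (m::nat \<Rightarrow> int).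
       inj_on \<gamma> {..<n} \<and> \<gamma> ` {..<n} \<subseteq> E \<and>
       (\<forall>x. (\<Prod>i<n. (\<gamma> i x) powi (m i)) = 1)
       \<longrightarrow> (\<forall>i<n. int N dvd m i)"
  show "N_PR N E" unfolding N_PR_def
  proof (intro allI impI)
    fix \<phi> :: "('g \<Rightarrow> complex) \<Rightarrow> complex"
    assume \<phi>: "\<forall>\<gamma>\<in>E. \<phi> \<gamma> \<in> roots_of_unity N"
    have ch: "character g" if "g \<in> E" for g using assms(3) that by (auto simp: dual_group_def)
    have "UNIV \<inter> (\<Inter>g\<in>E. {x. g x = \<phi> g}) \<noteq> {}"
    proof (rule compact_imp_fip_image[OF assms(1)])
      fix g assume "g \<in> E"
      then show "closed {x. g x = \<phi> g}"
        using ch[OF \<open>g \<in> E\<close>] unfolding character_def by (intro closed_Collect_eq continuous_on_const) auto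
    next
      fix I' assume I': "finite I'" "I' \<subseteq> E"
      obtain n :: nat and \<gamma> :: "nat \<Rightarrow> 'g \<Rightarrow> complex" where en: "I' = \<gamma> ` {i. i < n}" "inj_on \<gamma> {i. i < n}"
        using finite_imp_nat_seg_image_inj_on[OF I'(1)] by blast
      have lt: "{i. i < n} = {..<n}" by auto
      have gE: "\<gamma> i \<in> E" if "i < n" for i
      proof -
        have "\<gamma> i \<in> I'" unfolding en(1) using that by simp
        then show ?thesis using I'(2) by blast
      qed
      have "\<exists>x. \<forall>i<n. \<gamma> i x = \<phi> (\<gamma> i)"
      proof (rule finite_solve[OF assms(1)])
        fix i assume "i < n"
        then show "character (\<gamma> i)" using ch gE by auto
      next
        fix i assume "i < n"
        then have "\<phi> (\<gamma> i) ^ N = 1" using \<phi> gE by (auto simp: roots_of_unity_def)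
        then show "norm (\<phi> (\<gamma> i)) = 1" by (rule root_norm[OF _ assms(2)])
      next
        fix e assume e: "\<forall>x. (\<Prod>i<n. \<gamma> i x powi e i) = 1"
        have "inj_on \<gamma> {..<n} \<and> \<gamma> ` {..<n} \<subseteq> E \<and> (\<forall>x. (\<Prod>i<n. \<gamma> i x powi e i) = 1)"
          using en(2) lt gE e by (auto simp del: lessThan_iff)
        then have dv: "\<forall>i<n. int N dvd e i" using R[rule_format, of \<gamma> n e] by simp
        show "(\<Prod>i<n. \<phi> (\<gamma> i) powi e i) = 1"
        proof (rule prod.neutral, rule ballI)
          fix i assume "i \<in> {..<n}"
          then have "\<phi> (\<gamma> i) ^ N = 1" "int N dvd e i" using \<phi> gE dv by (auto simp: roots_of_unity_def)
          then show "\<phi> (\<gamma> i) powi e i = 1" by (rule root_powi_dvd)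
        qed
      qed
      then obtain x where "\<forall>i<n. \<gamma> i x = \<phi> (\<gamma> i)" by blast
      then have "x \<in> UNIV \<inter> (\<Inter>g\<in>I'. {x. g x = \<phi> g})" unfolding en(1) by auto
      then show "UNIV \<inter> (\<Inter>g\<in>I'. {x. g x = \<phi> g}) \<noteq> {}" by blast
    qed
    then obtain x where "x \<in> UNIV \<inter> (\<Inter>g\<in>E. {x. g x = \<phi> g})" by blast
    then show "\<exists>x. \<forall>\<gamma>\<in>E. \<phi> \<gamma> = \<gamma> x" by auto
  qed
qed


end
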